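(* Let $G_M$ be a maximal reducible graph solved by a line-tree $T_M$. Then the line-tree $T_1$ obtained from $T_M$ by inverting the entire tree is a persistent phylogeny solving $G_M$.
   Context: Persistent phylogeny. Let $M$ be a binary matrix with rows indexed by species $S$ and columns by characters $C=\{c_1,\dots,c_m\}$, and $A\subseteq C$ (active characters). A persistent phylogeny for $(M,A)$ is a rooted tree $T$ whose nodes $x$ carry vectors $l_x\in\{0,1\}^m$ (the state of $x$) such that: the root $r$ has $l_r[j]=1$ iff $c_j\in A$; each edge is labelled $c_j^+$ for each character changing from 0 to 1 on it and $c_j^-$ for each changing from 1 to 0; each character changes state on at most two edges, and if on two, they lie on one root-to-leaf path with the gain $c_j^+$ closer to the root than the loss $c_j^-$; each row of $M$ equals $l_x$ for some node $x$ (such a node is a species node of $T$). Red-black graphs. A red-black graph on species $S$ and characters $C$ is a bipartite graph on $S\cup C$ with red or black edges, each character incident only to black edges (inactive) or only to red edges (active). Its associated matrix has $M[s,c]=1$ iff $(s,c)$ is black, or $c$ is active and $(s,c)$ is not an edge; a tree solving the graph is a persistent phylogeny for (associated matrix, set of active characters). $S(c)=\{s:M[s,c]=1\}$. Realizing $c^+$ ($c$ inactive): with $D(c)$ the species of the component of $c$, add red edges from $c$ to $D(c)\setminus N(c)$, delete black edges on $c$ and isolated vertices; realizing $c^-$ ($c$ active, $D(c)\subseteq N(c)$): delete all edges on $c$ and isolated vertices. An active character red-adjacent to all species is free. A c-reduction $\langle c_1^+,\dots,c_k^+\rangle$ is successful if realizing the characters in order is always defined (realizing negatively each character right after it becomes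 free) and yields the empty graph. A red-black graph is reducible if it is connected and admits a successful reduction (i.e. is solved by some persistent phylogeny). Standing assumption: no free, null (isolated) or universal (inactive and black-adjacent to all species) characters, no species with no characters, no two identical character columns. An inactive character $c$ is maximal if no inactive $c'$ has $S(c)\subsetneq S(c')$. A maximal reducible graph is a reducible red-black graph all of whose characters are inactive and maximal. Line-trees and inversion. A line-tree is a tree consisting of a single path from the root (internal nodes have one child). A simple path may be contracted into one edge labelled by the sequence of labels on it. If $T_1$ is a line-tree whose sequence of species in depth-first order is $s_1,\dots,s_k$, the inverted tree $T_2$ is the line-tree with species sequence $s_k,\dots,s_1$, where the edge $(s_{i+1},s_i)$ of $T_2$ carries the same characters as the edge $(s_i,s_{i+1})$ of $T_1$ but with opposite signs (each $c^+$ becomes $c^-$ and vice versa). *)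

theory Defs
  imports Main
begin

text \<open>A red-black graph on species S (type 's) and characters C (type 'c):
  E is the set of (species, character) edges; A is the set of active characters.
  Edges incident to an active character are red, all others are black.\<close>

definition rb_graph :: "'s set \<Rightarrow> 'c set \<Rightarrow> ('s \<times> 'c) set \<Rightarrow> 'c set \<Rightarrow> bool" where
  "rb_graph S C E A \<longleftrightarrow> finite S \<and> finite C \<and> E \<subseteq> S \<times> C \<and> A \<subseteq> C"

definition assoc_matrix :: "('s \<times> 'c) set \<Rightarrow> 'c set \<Rightarrow> 's \<Rightarrow> 'c \<Rightarrow> bool" where
  "assoc_matrix E A s c \<longleftrightarrow> ((s, c) \<in> E \<and> c \<notin> A) \<or> (c \<in> A \<and> (s, c) \<notin> E)"

definition Sc :: "'s set \<Rightarrow> ('s \<times> 'c) set \<Rightarrow> 'c set \<Rightarrow> 'c \<Rightarrow> 's set" where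
  "Sc S E A c = {s \<in> S. assoc_matrix E A s c}"

definition rb_connected :: "'s set \<Rightarrow> 'c set \<Rightarrow> ('s \<times> 'c) set \<Rightarrow> bool" where
  "rb_connected S C E \<longleftrightarrow>
     (let R = {(Inl s, Inr c) | s c. (s, c) \<in> E};
          R' = R \<union> R\<inverse>
      in \<forall>u \<in> Inl ` S \<union> Inr ` C. \<forall>v \<in> Inl ` S \<union> Inr ` C. (u, v) \<in> R'\<^sup>*)"

text \<open>Standing assumptions: no free, null or universal characters, no species
  without characters, no two identical character columns.\<close>
definition standing_assms :: "'s set \<Rightarrow> 'c set \<Rightarrow> ('s \<times> 'c) set \<Rightarrow> 'c set \<Rightarrow> bool" where
  "standing_assms S C E A \<longleftrightarrow>
     \<not> (\<exists>c \<in> A. \<forall>s \<in> S. (s, c) \<in> E) \<and>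
     (\<forall>c \<in> C. \<exists>s. (s, c) \<in> E) \<and>
     \<not> (\<exists>c \<in> C - A. \<forall>s \<in> S. (s, c) \<in> E) \<and>
     (\<forall>s \<in> S. \<exists>c. (s, c) \<in> E) \<and>
     (\<forall>c \<in> C. \<forall>c' \<in> C. (\<forall>s \<in> S. assoc_matrix E A s c = assoc_matrix E A s c') \<longrightarrow> c = c')"

text \<open>A rooted tree on node set N with root r, given by a parent function p
  (the edges are (p x, x) for x \<in> N - {r}), and node states l.
  ancestor p y x: y lies on the path from x to the root (y = x allowed).\<close>
definition ancestor :: "('n \<Rightarrow> 'n) \<Rightarrow> 'n \<Rightarrow> 'n \<Rightarrow> bool" where
  "ancestor p y x \<longleftrightarrow> (\<exists>k. (p ^^ k) x = y)"

definition rooted_tree :: "'n set \<Rightarrow> 'n \<Rightarrow> ('n \<Rightarrow> 'n) \<Rightarrow> bool" where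
  "rooted_tree N r p \<longleftrightarrow> finite N \<and> r \<in> N \<and>
     (\<forall>x \<in> N - {r}. p x \<in> N) \<and> (\<forall>x \<in> N. ancestor p r x)"

text \<open>Edges (identified with their lower endpoint) on which character c changes state.\<close>
definition change_edges :: "'n set \<Rightarrow> 'n \<Rightarrow> ('n \<Rightarrow> 'n) \<Rightarrow> ('n \<Rightarrow> 'c \<Rightarrow> bool) \<Rightarrow> 'c \<Rightarrow> 'n set" where
  "change_edges N r p l c = {x \<in> N - {r}. l (p x) c \<noteq> l x c}"

definition persistent_phylogeny ::
  "'s set \<Rightarrow> 'c set \<Rightarrow> ('s \<times> 'c) set \<Rightarrow> 'c set \<Rightarrow>
   'n set \<Rightarrow> 'n \<Rightarrow> ('n \<Rightarrow> 'n) \<Rightarrow> ('n \<Rightarrow> 'c \<Rightarrow> bool) \<Rightarrow> bool" where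
  "persistent_phylogeny S C E A N r p l \<longleftrightarrow>
     rooted_tree N r p \<and>
     (\<forall>c \<in> C. l r c = (c \<in> A)) \<and>
     (\<forall>c \<in> C. card (change_edges N r p l c) \<le> 2 \<and>
        (card (change_edges N r p l c) = 2 \<longrightarrow>
           (\<exists>x1 x2. change_edges N r p l c = {x1, x2} \<and> x1 \<noteq> x2 \<and> ancestor p x1 x2 \<and>
                    l x1 c \<and> \<not> l x2 c))) \<and>
     (\<forall>s \<in> S. \<exists>x \<in> N. \<forall>c \<in> C. assoc_matrix E A s c = l x c)"

definition reducible :: "'s set \<Rightarrow> 'c set \<Rightarrow> ('s \<times> 'c) set \<Rightarrow> 'c set \<Rightarrow> bool" where
  "reducible S C E A \<longleftrightarrow> rb_graph S C E A \<and> rb_connected S C E \<and>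
     (\<exists>(N :: nat set) r p l. persistent_phylogeny S C E A N r p l)"

definition maximal_char :: "'s set \<Rightarrow> 'c set \<Rightarrow> ('s \<times> 'c) set \<Rightarrow> 'c set \<Rightarrow> 'c \<Rightarrow> bool" where
  "maximal_char S C E A c \<longleftrightarrow> c \<in> C - A \<and>
     \<not> (\<exists>c' \<in> C - A. Sc S E A c \<subset> Sc S E A c')"

definition maximal_reducible :: "'s set \<Rightarrow> 'c set \<Rightarrow> ('s \<times> 'c) set \<Rightarrow> 'c set \<Rightarrow> bool" where
  "maximal_reducible S C E A \<longleftrightarrow> reducible S C E A \<and> A = {} \<and>
     (\<forall>c \<in> C. maximal_char S C E A c)"

text \<open>A line-tree is given by the list of its node states from the root down
  (the i-th node has parent i-1).\<close>
definition line_solves ::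
  "'s set \<Rightarrow> 'c set \<Rightarrow> ('s \<times> 'c) set \<Rightarrow> 'c set \<Rightarrow> ('c \<Rightarrow> bool) list \<Rightarrow> bool" where
  "line_solves S C E A ls \<longleftrightarrow> ls \<noteq> [] \<and>
     persistent_phylogeny S C E A {0..<length ls} 0 (\<lambda>i. i - 1) (\<lambda>i. ls ! i)"

definition is_species_state :: "'s set \<Rightarrow> 'c set \<Rightarrow> ('s \<times> 'c) set \<Rightarrow> 'c set \<Rightarrow> ('c \<Rightarrow> bool) \<Rightarrow> bool" where
  "is_species_state S C E A v \<longleftrightarrow> (\<exists>s \<in> S. \<forall>c \<in> C. assoc_matrix E A s c = v c)"

text \<open>Inversion of a line-tree: the species nodes s_1..s_k (in depth-first order,
  i.e. order along the line, root excluded) are listed in reverse order below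
  the root; each species node keeps its state, hence the edge (s_{i+1}, s_i)
  carries the characters of edge (s_i, s_{i+1}) with opposite signs.  The new
  root carries the root state (the active set), and the edge from the root to
  s_k realises the state of s_k.\<close>
definition invert_line ::
  "'s set \<Rightarrow> 'c set \<Rightarrow> ('s \<times> 'c) set \<Rightarrow> 'c set \<Rightarrow> ('c \<Rightarrow> bool) list \<Rightarrow> ('c \<Rightarrow> bool) list" where
  "invert_line S C E A ls = hd ls # rev (filter (is_species_state S C E A) (tl ls))"

end

theory Submission imports Defs begin

definition shape :: "bool list \<Rightarrow> bool" where
  "shape v \<longleftrightarrow> (\<exists>xs ys zs. v = xs @ ys @ zs \<and> (\<forall>x\<in>set xs. \<not> x) \<and> (\<forall>y\<in>set ys. y) \<and> (\<forall>z\<in>set zs. \<not> z))"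

definition ce :: "bool list \<Rightarrow> nat set" where
  "ce v = {i \<in> {0..<length v} - {0}. v!(i-1) \<noteq> v!i}"

definition cv :: "bool list \<Rightarrow> bool" where
  "cv v \<longleftrightarrow> card (ce v) \<le> 2 \<and> (card (ce v) = 2 \<longrightarrow>
     (\<exists>x1 x2. ce v = {x1, x2} \<and> x1 \<noteq> x2 \<and> ancestor (\<lambda>i::nat. i - 1) x1 x2 \<and> v!x1 \<and> \<not> v!x2))"

lemma pow_pred: "((\<lambda>i::nat. i - 1) ^^ k) x = x - k"
  by (induction k) auto

lemma ancestor_pred: "ancestor (\<lambda>i::nat. i - 1) y x \<longleftrightarrow> y \<le> x"
  unfolding ancestor_def pow_pred
  by (metis diff_diff_cancel diff_le_self)

lemma rooted_line: "m > 0 \<Longrightarrow> rooted_tree {0..<m} 0 (\<lambda>i::nat. i - 1)"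
  unfolding rooted_tree_def using ancestor_pred by auto

lemma ce_finite: "finite (ce v)" unfolding ce_def by auto

lemma parity: "\<not> v!0 \<Longrightarrow> i < length v \<Longrightarrow> v!i = odd (card {j \<in> ce v. j \<le> i})"
proof (induction i)
  case 0
  have "{j \<in> ce v. j \<le> 0} = {}" unfolding ce_def by auto
  then have c0: "card {j \<in> ce v. j \<le> 0} = 0" by (metis card.empty)
  show ?case unfolding c0 using 0 by simp
next
  case (Suc i)
  have IH: "v!i = odd (card {j \<in> ce v. j \<le> i})" using Suc by simp
  show ?case
  proof (cases "Suc i \<in> ce v")
    case True
    have "{j \<in> ce v. j \<le> Suc i} = insert (Suc i) {j \<in> ce v. j \<le> i}" using True by auto
    moreover have "finite {j \<in> ce v. j \<le> i}" using ce_finite by auto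
    ultimately have "card {j \<in> ce v. j \<le> Suc i} = Suc (card {j \<in> ce v. j \<le> i})" by simp
    moreover have "v!Suc i \<noteq> v!i" using True unfolding ce_def by auto
    ultimately show ?thesis using IH by auto
  next
    case False
    have "{j \<in> ce v. j \<le> Suc i} = {j \<in> ce v. j \<le> i}" using False le_Suc_eq by auto
    moreover have "v!Suc i = v!i" using False Suc.prems unfolding ce_def by auto
    ultimately show ?thesis using IH by auto
  qed
qed

lemma formula_shape:
  assumes "\<forall>i<length v. v!i = (a \<le> i \<and> i < b)" "a \<le> b"
  shows "shape v"
proof -
  have e: "v = take a v @ take (b - a) (drop a v) @ drop b v"
    using assms(2) by (metis append_take_drop_id drop_drop le_add_diff_inverse2)
  have 1: "\<forall>x\<in>set (take a v). \<not> x" using assms(1)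
    by (auto simp: in_set_conv_nth)
  have 2: "\<forall>x\<in>set (take (b - a) (drop a v)). x" using assms
    by (auto simp: in_set_conv_nth)
  have 3: "\<forall>x\<in>set (drop b v). \<not> x" using assms(1)
    by (auto simp: in_set_conv_nth)
  show ?thesis unfolding shape_def using e 1 2 3 by blast
qed

lemma cv_shape: assumes "v \<noteq> []" "\<not> v!0" "cv v" shows "shape v"
proof -
  have fin: "finite (ce v)" by (rule ce_finite)
  have c2: "card (ce v) \<le> 2" using assms(3) unfolding cv_def by simp
  have "card (ce v) = 0 \<or> card (ce v) = 1 \<or> card (ce v) = 2" using c2 by arith
  moreover
  { assume "card (ce v) = 0"
    then have "ce v = {}" using fin by simp
    then have "\<forall>i<length v. v!i = (0 \<le> i \<and> i < (0::nat))" using parity[OF assms(2)] by simp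
    then have ?thesis using formula_shape[of v 0 0] by simp }
  moreover
  { assume "card (ce v) = 1"
    then obtain x where x: "ce v = {x}" using card_1_singletonE by blast
    have f1: "\<forall>i<length v. v!i = (x \<le> i \<and> i < length v)"
    proof (intro allI impI)
      fix i assume i: "i < length v"
      have p: "v!i = odd (card {j \<in> ce v. j \<le> i})" by (rule parity[OF assms(2) i])
      have "{j \<in> ce v. j \<le> i} = (if x \<le> i then {x} else {})" using x by auto
      then show "v!i = (x \<le> i \<and> i < length v)" using p i by simp
    qed
    have "x \<in> ce v" using x by simp
    then have xl: "x \<le> length v" unfolding ce_def by simp
    have ?thesis using formula_shape[of v x "length v"] xl f1 by blast }
  moreover
  { assume "card (ce v) = 2"
    then have "\<exists>x1 x2. ce v = {x1, x2} \<and> x1 \<noteq> x2 \<and> ancestor (\<lambda>i::nat. i - 1) x1 x2 \<and> v!x1 \<and> \<not> v!x2"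
      using assms(3) unfolding cv_def by simp
    then obtain x1 x2 where x: "ce v = {x1, x2}" "x1 \<noteq> x2" "ancestor (\<lambda>i::nat. i - 1) x1 x2"
      by (elim exE conjE) simp
    have lt: "x1 < x2" using x(2,3) ancestor_pred by auto
    have "\<forall>i<length v. v!i = (x1 \<le> i \<and> i < x2)"
    proof (intro allI impI)
      fix i assume i: "i < length v"
      have p: "v!i = odd (card {j \<in> ce v. j \<le> i})" by (rule parity[OF assms(2) i])
      consider "i < x1" | "x1 \<le> i" "i < x2" | "x2 \<le> i" by linarith
      then show "v!i = (x1 \<le> i \<and> i < x2)"
      proof cases
        case 1
        then have e1: "{j \<in> ce v. j \<le> i} = {}" unfolding x(1) using lt by auto
        then show ?thesis using p 1 unfolding e1 by simp
      next
        case 2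
        then have e2: "{j \<in> ce v. j \<le> i} = {x1}" unfolding x(1) using lt by auto
        then show ?thesis using p 2 unfolding e2 by simp
      next
        case 3
        then have e3: "{j \<in> ce v. j \<le> i} = {x1, x2}" unfolding x(1) using lt by auto
        then show ?thesis using p 3 lt unfolding e3 by simp
      qed
    qed
    then have ?thesis using formula_shape[of v x1 x2] lt by simp }
  ultimately show ?thesis by blast
qed

lemma l1: "0 < (a::nat) \<Longrightarrow> a < b \<Longrightarrow> 0 < i \<Longrightarrow> ((a \<le> i - 1 \<and> i - 1 < b) \<noteq> (a \<le> i \<and> i < b)) \<longleftrightarrow> (i = a \<or> i = b)"
  by (cases i) auto

lemma l2: assumes "\<forall>x\<in>set xs. \<not> x" "\<forall>y\<in>set ys. y" "\<forall>z\<in>set zs. \<not> z" "i < length (xs@ys@zs)"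
  shows "(xs@ys@zs)!i = (length xs \<le> i \<and> i < length xs + length ys)"
proof -
  consider "i < length xs" | "length xs \<le> i" "i < length xs + length ys" | "length xs + length ys \<le> i" by linarith
  then show ?thesis
  proof cases
    case 1
    then have e: "(xs@ys@zs)!i = xs!i" by (simp add: nth_append)
    have "xs!i \<in> set xs" using 1 by (rule nth_mem)
    then have "\<not> xs!i" using assms(1) by blast
    then show ?thesis using e 1 by simp
  next
    case 2
    have il: "i - length xs < length ys" using 2 by simp
    have e: "(xs@ys@zs)!i = ys!(i - length xs)" using 2 il by (simp add: nth_append)
    from il have "ys!(i - length xs) \<in> set ys" by (rule nth_mem)
    then have "ys!(i - length xs)" using assms(2) by blast
    then show ?thesis using e 2 by simp
  next
    case 3
    have n1: "\<not> i < length xs" "\<not> i - length xs < length ys" using 3 by auto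
    have e: "(xs@ys@zs)!i = zs!(i - length xs - length ys)" using n1 by (simp add: nth_append)
    have "i - length xs - length ys < length zs" using 3 assms(4) by simp
    then have "zs!(i - length xs - length ys) \<in> set zs" by (rule nth_mem)
    then have "\<not> zs!(i - length xs - length ys)" using assms(3) by blast
    then show ?thesis using e 3 by simp
  qed
qed

lemma shape_cv: assumes "v \<noteq> []" "\<not> v!0" "shape v" shows "cv v"
proof -
  obtain xs ys zs where v: "v = xs @ ys @ zs" "\<forall>x\<in>set xs. \<not> x" "\<forall>y\<in>set ys. y" "\<forall>z\<in>set zs. \<not> z"
    using assms(3) unfolding shape_def by blast
  define a where "a = length xs"
  define b where "b = length xs + length ys"
  have f: "\<forall>i<length v. v!i = (a \<le> i \<and> i < b)"
    unfolding a_def b_def v(1) using l2[OF v(2,3,4)] by blast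
  have ab: "a \<le> b" "b \<le> length v" unfolding a_def b_def v(1) by auto
  have cei: "i \<in> ce v \<longleftrightarrow> (0 < i \<and> i < length v \<and> (a \<le> i - 1 \<and> i - 1 < b) \<noteq> (a \<le> i \<and> i < b))" for i
  proof (cases "0 < i \<and> i < length v")
    case True
    then have "v!i = (a \<le> i \<and> i < b)" "v!(i-1) = (a \<le> i - 1 \<and> i - 1 < b)" using f by auto
    then show ?thesis unfolding ce_def using True by auto
  next
    case False
    then show ?thesis unfolding ce_def by auto
  qed
  show ?thesis
  proof (cases "a = b")
    case True
    have "i \<notin> ce v" for i using cei[of i] True by simp
    then have "ce v = {}" by blast
    then show ?thesis unfolding cv_def by simp
  next
    case False
    then have alb: "a < b" using ab by simp
    have a0: "a > 0"
    proof (rule ccontr)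
      assume "\<not> a > 0"
      then have a: "a = 0" by simp
      have "0 < length v" using assms(1) by simp
      then have "v!0 = (a \<le> 0 \<and> 0 < b)" using f by blast
      then show False using assms(2) a False ab by simp
    qed
    have cei2: "i \<in> ce v \<longleftrightarrow> (0 < i \<and> i < length v \<and> (i = a \<or> i = b))" for i
      using cei[of i] l1[OF a0 alb, of i] by blast
    show ?thesis
    proof (cases "b < length v")
      case True
      have ce2: "ce v = {a, b}"
      proof (rule set_eqI)
        fix i show "i \<in> ce v \<longleftrightarrow> i \<in> {a, b}" unfolding cei2 using a0 alb True by auto
      qed
      have va: "v!a" "\<not> v!b" using f ab False True by auto
      have anc: "ancestor (\<lambda>i::nat. i - 1) a b" using ancestor_pred ab by simp
      have c: "card (ce v) = 2" unfolding ce2 using False by simp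
      show ?thesis unfolding cv_def c using ce2 False anc va by blast
    next
      case F2: False
      have "ce v = {a}"
      proof (rule set_eqI)
        fix i show "i \<in> ce v \<longleftrightarrow> i \<in> {a}" unfolding cei2 using a0 alb F2 ab by auto
      qed
      then show ?thesis unfolding cv_def by simp
    qed
  qed
qed


lemma shapeI: "v = xs @ ys @ zs \<Longrightarrow> \<forall>x\<in>set xs. \<not> x \<Longrightarrow> \<forall>y\<in>set ys. y \<Longrightarrow> \<forall>z\<in>set zs. \<not> z \<Longrightarrow> shape v"
  unfolding shape_def by blast

lemma shape_tl: assumes "shape (x # v)" shows "shape v"
proof -
  obtain xs ys zs where v: "x # v = xs @ ys @ zs" "\<forall>x\<in>set xs. \<not> x" "\<forall>y\<in>set ys. y" "\<forall>z\<in>set zs. \<not> z"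
    using assms unfolding shape_def by blast
  show ?thesis
  proof (cases xs)
    case (Cons x' xs')
    then have "v = xs' @ ys @ zs" using v(1) by simp
    moreover have "set xs' \<subseteq> set xs" using Cons by auto
    then have "\<forall>x\<in>set xs'. \<not> x" using v(2) by blast
    ultimately show ?thesis using shapeI v(3,4) by blast
  next
    case Nil
    show ?thesis
    proof (cases ys)
      case (Cons y' ys')
      then have "v = [] @ ys' @ zs" using v(1) Nil by simp
      moreover have "set ys' \<subseteq> set ys" using Cons by auto
      then have "\<forall>x\<in>set ys'. x" using v(3) by blast
      ultimately show ?thesis using shapeI v(4) by (metis empty_iff list.set(1))
    next
      case N2: Nil
      then obtain zs' where "zs = x # zs'" "v = zs'" using v(1) Nil by (cases zs) auto
      then have "v = [] @ [] @ zs'" "\<forall>x\<in>set zs'. \<not> x" using v(4) by auto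
      then show ?thesis using shapeI by (metis empty_iff list.set(1))
    qed
  qed
qed

lemma shape_rev: assumes "shape v" shows "shape (rev v)"
proof -
  obtain xs ys zs where v: "v = xs @ ys @ zs" "\<forall>x\<in>set xs. \<not> x" "\<forall>y\<in>set ys. y" "\<forall>z\<in>set zs. \<not> z"
    using assms unfolding shape_def by blast
  have "rev v = rev zs @ rev ys @ rev xs" using v(1) by simp
  moreover have "\<forall>x\<in>set (rev zs). \<not> x" "\<forall>x\<in>set (rev ys). x" "\<forall>x\<in>set (rev xs). \<not> x"
    using v(2,3,4) unfolding set_rev by blast+
  ultimately show ?thesis using shapeI by blast
qed

lemma shape_cons: assumes "shape v" shows "shape (False # v)"
proof -
  obtain xs ys zs where v: "v = xs @ ys @ zs" "\<forall>x\<in>set xs. \<not> x" "\<forall>y\<in>set ys. y" "\<forall>z\<in>set zs. \<not> z"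
    using assms unfolding shape_def by blast
  have "False # v = (False # xs) @ ys @ zs" using v(1) by simp
  moreover have "\<forall>x\<in>set (False # xs). \<not> x" using v(2) by simp
  ultimately show ?thesis using shapeI v(3,4) by blast
qed

lemma shape_filter: assumes "shape (map f l)" shows "shape (map f (filter P l))"
proof -
  obtain xs ys zs where v: "map f l = xs @ ys @ zs" "\<forall>x\<in>set xs. \<not> x" "\<forall>y\<in>set ys. y" "\<forall>z\<in>set zs. \<not> z"
    using assms unfolding shape_def by blast
  obtain l1 l2 l3 where l: "l = l1 @ l2 @ l3" "map f l1 = xs" "map f l2 = ys" "map f l3 = zs"
    using v(1) by (metis map_eq_append_conv)
  have "map f (filter P l) = map f (filter P l1) @ map f (filter P l2) @ map f (filter P l3)"
    using l(1) by simp
  moreover have "\<forall>x\<in>set (map f (filter P l1)). \<not> x" using v(2) l(2) by auto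
  moreover have "\<forall>x\<in>set (map f (filter P l2)). x" using v(3) l(3) by auto
  moreover have "\<forall>x\<in>set (map f (filter P l3)). \<not> x" using v(4) l(4) by auto
  ultimately show ?thesis using shapeI by blast
qed


lemma ce_eq: "change_edges {0..<length ls} 0 (\<lambda>i. i - 1) (\<lambda>i. ls ! i) c = ce (map (\<lambda>f. f c) ls)"
  unfolding change_edges_def ce_def by auto

lemma cc_iff:
  "(card (change_edges {0..<length ls} 0 (\<lambda>i. i - 1) (\<lambda>i. ls ! i) c) \<le> 2 \<and>
    (card (change_edges {0..<length ls} 0 (\<lambda>i. i - 1) (\<lambda>i. ls ! i) c) = 2 \<longrightarrow>
      (\<exists>x1 x2. change_edges {0..<length ls} 0 (\<lambda>i. i - 1) (\<lambda>i. ls ! i) c = {x1, x2} \<and> x1 \<noteq> x2 \<and>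
         ancestor (\<lambda>i. i - 1) x1 x2 \<and> (ls ! x1) c \<and> \<not> (ls ! x2) c)))
   \<longleftrightarrow> cv (map (\<lambda>f. f c) ls)"
proof -
  let ?v = "map (\<lambda>f. f c) ls"
  have lt: "x \<in> ce ?v \<Longrightarrow> ?v ! x = (ls ! x) c" for x unfolding ce_def by auto
  have ex: "(\<exists>x1 x2. ce ?v = {x1, x2} \<and> x1 \<noteq> x2 \<and> ancestor (\<lambda>i::nat. i - 1) x1 x2 \<and> (ls ! x1) c \<and> \<not> (ls ! x2) c)
      \<longleftrightarrow> (\<exists>x1 x2. ce ?v = {x1, x2} \<and> x1 \<noteq> x2 \<and> ancestor (\<lambda>i::nat. i - 1) x1 x2 \<and> ?v ! x1 \<and> \<not> ?v ! x2)"
  proof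
    assume "\<exists>x1 x2. ce ?v = {x1, x2} \<and> x1 \<noteq> x2 \<and> ancestor (\<lambda>i::nat. i - 1) x1 x2 \<and> (ls ! x1) c \<and> \<not> (ls ! x2) c"
    then obtain x1 x2 where h: "ce ?v = {x1, x2}" "x1 \<noteq> x2" "ancestor (\<lambda>i::nat. i - 1) x1 x2" "(ls ! x1) c" "\<not> (ls ! x2) c"
      by blast
    have "?v ! x1 = (ls ! x1) c" "?v ! x2 = (ls ! x2) c" using lt h(1) by auto
    then show "\<exists>x1 x2. ce ?v = {x1, x2} \<and> x1 \<noteq> x2 \<and> ancestor (\<lambda>i::nat. i - 1) x1 x2 \<and> ?v ! x1 \<and> \<not> ?v ! x2"
      using h by metis
  next
    assume "\<exists>x1 x2. ce ?v = {x1, x2} \<and> x1 \<noteq> x2 \<and> ancestor (\<lambda>i::nat. i - 1) x1 x2 \<and> ?v ! x1 \<and> \<not> ?v ! x2"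
    then obtain x1 x2 where h: "ce ?v = {x1, x2}" "x1 \<noteq> x2" "ancestor (\<lambda>i::nat. i - 1) x1 x2" "?v ! x1" "\<not> ?v ! x2"
      by blast
    have "?v ! x1 = (ls ! x1) c" "?v ! x2 = (ls ! x2) c" using lt h(1) by auto
    then show "\<exists>x1 x2. ce ?v = {x1, x2} \<and> x1 \<noteq> x2 \<and> ancestor (\<lambda>i::nat. i - 1) x1 x2 \<and> (ls ! x1) c \<and> \<not> (ls ! x2) c"
      using h by metis
  qed
  show ?thesis unfolding ce_eq cv_def ex ..
qed

theorem lemma3:
  fixes S :: "'s set" and C :: "'c set" and E :: "('s \<times> 'c) set" and A :: "'c set"
    and TM :: "('c \<Rightarrow> bool) list"
  assumes "rb_graph S C E A"
    and "standing_assms S C E A"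
    and "maximal_reducible S C E A"
    and "line_solves S C E A TM"
  shows "line_solves S C E A (invert_line S C E A TM)"
proof -
  have ne: "TM \<noteq> []" and pp: "persistent_phylogeny S C E A {0..<length TM} 0 (\<lambda>i. i - 1) (\<lambda>i. TM ! i)"
    using assms(4) unfolding line_solves_def by auto
  have A0: "A = {}" using assms(3) unfolding maximal_reducible_def by simp
  define P where "P = is_species_state S C E A"
  define L where "L = invert_line S C E A TM"
  have L: "L = hd TM # rev (filter P (tl TM))" unfolding L_def invert_line_def P_def ..
  have TMc: "TM = hd TM # tl TM" using ne by simp
  have Lne: "L \<noteq> []" unfolding L by simp
  have L0: "L ! 0 = TM ! 0" unfolding L using ne by (simp add: hd_conv_nth)
  have rt: "rooted_tree {0..<length L} 0 (\<lambda>i. i - 1)" using Lne by (intro rooted_line) simp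
  have root: "\<forall>c\<in>C. (L ! 0) c = (c \<in> A)" using pp L0 unfolding persistent_phylogeny_def by simp
  have chars: "cv (map (\<lambda>f. f c) L)" if c: "c \<in> C" for c
  proof -
    let ?f = "\<lambda>f. f c"
    have "cv (map ?f TM)" using pp c unfolding persistent_phylogeny_def cc_iff by blast
    moreover have h0: "\<not> (TM ! 0) c" using pp c A0 unfolding persistent_phylogeny_def by simp
    ultimately have "shape (map ?f TM)" using cv_shape ne by auto
    then have "shape (hd TM c # map ?f (tl TM))" using TMc by (metis list.simps(9))
    then have "shape (map ?f (tl TM))" by (rule shape_tl)
    then have "shape (map ?f (filter P (tl TM)))" by (rule shape_filter)
    then have "shape (rev (map ?f (filter P (tl TM))))" by (rule shape_rev)
    then have "shape (False # rev (map ?f (filter P (tl TM))))" by (rule shape_cons)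
    moreover have "hd TM c = False" using h0 ne by (simp add: hd_conv_nth)
    ultimately have sh: "shape (map ?f L)" unfolding L by (simp add: rev_map)
    have "\<not> map ?f L ! 0" using L0 h0 Lne by simp
    then show ?thesis using shape_cv sh Lne by simp
  qed
  have species: "\<exists>x\<in>{0..<length L}. \<forall>c\<in>C. assoc_matrix E A s c = (L ! x) c" if s: "s \<in> S" for s
  proof -
    obtain x where x: "x \<in> {0..<length TM}" "\<forall>c\<in>C. assoc_matrix E A s c = (TM ! x) c"
      using pp s unfolding persistent_phylogeny_def by blast
    obtain c where sc: "(s, c) \<in> E" using assms(2) s unfolding standing_assms_def by blast
    have cC: "c \<in> C" using sc assms(1) unfolding rb_graph_def by blast
    have "assoc_matrix E A s c" using sc A0 unfolding assoc_matrix_def by simp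
    then have "(TM ! x) c" using x cC by simp
    moreover have "\<not> (TM ! 0) c" using pp cC A0 unfolding persistent_phylogeny_def by simp
    ultimately have x0: "x \<noteq> 0" by metis
    then have "(hd TM # tl TM) ! x = tl TM ! (x - 1)" by (cases x) auto
    then have "TM ! x = tl TM ! (x - 1)" using TMc by metis
    moreover have "x - 1 < length (tl TM)" using x x0 by simp
    ultimately have "TM ! x \<in> set (tl TM)" by simp
    moreover have "P (TM ! x)" unfolding P_def is_species_state_def using s x by blast
    ultimately have "TM ! x \<in> set L" unfolding L by simp
    then obtain y where y: "y < length L" "L ! y = TM ! x" by (metis in_set_conv_nth)
    have "\<forall>c\<in>C. assoc_matrix E A s c = (L ! y) c" using x(2) y(2) by simp
    then show ?thesis using y(1) by auto
  qed
  have "persistent_phylogeny S C E A {0..<length L} 0 (\<lambda>i. i - 1) (\<lambda>i. L ! i)"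
    unfolding persistent_phylogeny_def
  proof (intro conjI)
    show "rooted_tree {0..<length L} 0 (\<lambda>i. i - 1)" by (rule rt)
    show "\<forall>c\<in>C. (L ! 0) c = (c \<in> A)" by (rule root)
    show "\<forall>s\<in>S. \<exists>x\<in>{0..<length L}. \<forall>c\<in>C. assoc_matrix E A s c = (L ! x) c" using species by blast
    show "\<forall>c\<in>C. card (change_edges {0..<length L} 0 (\<lambda>i. i - 1) (\<lambda>i. L ! i) c) \<le> 2 \<and>
      (card (change_edges {0..<length L} 0 (\<lambda>i. i - 1) (\<lambda>i. L ! i) c) = 2 \<longrightarrow>
      (\<exists>x1 x2. change_edges {0..<length L} 0 (\<lambda>i. i - 1) (\<lambda>i. L ! i) c = {x1, x2} \<and> x1 \<noteq> x2 \<and>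
         ancestor (\<lambda>i. i - 1) x1 x2 \<and> (L ! x1) c \<and> \<not> (L ! x2) c))"
    proof
      fix c assume "c \<in> C"
      then show "card (change_edges {0..<length L} 0 (\<lambda>i. i - 1) (\<lambda>i. L ! i) c) \<le> 2 \<and>
      (card (change_edges {0..<length L} 0 (\<lambda>i. i - 1) (\<lambda>i. L ! i) c) = 2 \<longrightarrow>
      (\<exists>x1 x2. change_edges {0..<length L} 0 (\<lambda>i. i - 1) (\<lambda>i. L ! i) c = {x1, x2} \<and> x1 \<noteq> x2 \<and>
         ancestor (\<lambda>i. i - 1) x1 x2 \<and> (L ! x1) c \<and> \<not> (L ! x2) c))"
        unfolding cc_iff by (rule chars)
    qed
  qed
  then show ?thesis unfolding line_solves_def L_def[symmetric] using Lne by simp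
qed

end
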